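(* Let $\pi\in H(\mathbb{Z})$ with $\pi\pi^*=p$ a prime, $p\ge 13$, and let $C$ be an $(n,k)$ linear code over $H(\mathbb{Z})_\pi$. If $C$ corrects all errors of Lipschitz weight $2$ or less, then $(p^2)^{n-k}\ge 32n^2+8n+1$.
   Context: $H(\mathbb{Z})=\{a_0+a_1e_1+a_2e_2+a_3e_3:a_i\in\mathbb{Z}\}$ (Lipschitz integers) with quaternion multiplication $e_1^2=e_2^2=e_3^2=-1$, $e_1e_2=-e_2e_1=e_3$, $e_3e_1=-e_1e_3=e_2$, $e_2e_3=-e_3e_2=e_1$; $q^*=a_0-a_1e_1-a_2e_2-a_3e_3$, $N(q)=qq^*$. Right congruence: $q_1\equiv_r q_2 \pmod\pi$ iff $q_1-q_2=\delta\pi$ for some $\delta\in H(\mathbb{Z})$; $H(\mathbb{Z})_\pi=H(\mathbb{Z})/H(\mathbb{Z})\pi$, which has $p^2$ elements. The Lipschitz weight of a class $\gamma$ is $\min\{|a_0|+|a_1|+|a_2|+|a_3| : a_0+a_1e_1+a_2e_2+a_3e_3\in\gamma\}$; the weight of a vector is the sum of the weights of its components. An $(n,k)$ linear code over $H(\mathbb{Z})_\pi$ is an additive subgroup $C\subseteq H(\mathbb{Z})_\pi^n$ such that $H(\mathbb{Z})_\pi^n/C$ has exactly $(p^2)^{n-k}$ cosets. $C$ corrects all errors of weight $t$ or less if all vectors of Lipschitz weight at most $t$ lie in pairwise distinct cosets of $C$. *)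

theory Defs
  imports Main "HOL-Computational_Algebra.Primes"
begin

text \<open>Lipschitz integers a0 + a1 e1 + a2 e2 + a3 e3, represented as integer 4-tuples.\<close>
type_synonym lip = "int \<times> int \<times> int \<times> int"

definition lzero :: lip where "lzero = (0, 0, 0, 0)"

definition ladd :: "lip \<Rightarrow> lip \<Rightarrow> lip" where
  "ladd x y = (case x of (a0, a1, a2, a3) \<Rightarrow> case y of (b0, b1, b2, b3) \<Rightarrow>
     (a0 + b0, a1 + b1, a2 + b2, a3 + b3))"

definition lneg :: "lip \<Rightarrow> lip" where
  "lneg x = (case x of (a0, a1, a2, a3) \<Rightarrow> (- a0, - a1, - a2, - a3))"

text \<open>Hamilton product with e1^2=e2^2=e3^2=-1, e1e2=e3, e2e3=e1, e3e1=e2.\<close>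
definition lmult :: "lip \<Rightarrow> lip \<Rightarrow> lip" where
  "lmult x y = (case x of (a0, a1, a2, a3) \<Rightarrow> case y of (b0, b1, b2, b3) \<Rightarrow>
     (a0*b0 - a1*b1 - a2*b2 - a3*b3,
      a0*b1 + a1*b0 + a2*b3 - a3*b2,
      a0*b2 - a1*b3 + a2*b0 + a3*b1,
      a0*b3 + a1*b2 - a2*b1 + a3*b0))"

definition lconj :: "lip \<Rightarrow> lip" where
  "lconj x = (case x of (a0, a1, a2, a3) \<Rightarrow> (a0, - a1, - a2, - a3))"

definition rcong :: "lip \<Rightarrow> lip \<Rightarrow> lip \<Rightarrow> bool" where
  "rcong pi q1 q2 \<longleftrightarrow> (\<exists>\<delta>. ladd q1 (lneg q2) = lmult \<delta> pi)"

definition lclass :: "lip \<Rightarrow> lip \<Rightarrow> lip set" where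
  "lclass pi q = {r. rcong pi r q}"

text \<open>The quotient H(Z)_pi = H(Z)/H(Z)pi, as the set of right congruence classes.\<close>
definition Hpi :: "lip \<Rightarrow> lip set set" where
  "Hpi pi = range (lclass pi)"

definition cadd :: "lip set \<Rightarrow> lip set \<Rightarrow> lip set" where
  "cadd X Y = {ladd x y | x y. x \<in> X \<and> y \<in> Y}"

definition labsw :: "lip \<Rightarrow> nat" where
  "labsw x = (case x of (a0, a1, a2, a3) \<Rightarrow> nat \<bar>a0\<bar> + nat \<bar>a1\<bar> + nat \<bar>a2\<bar> + nat \<bar>a3\<bar>)"

definition cweight :: "lip set \<Rightarrow> nat" where
  "cweight \<gamma> = (LEAST w. \<exists>q\<in>\<gamma>. labsw q = w)"

text \<open>Vectors of length n over H(Z)_pi: functions on indices, extensional outside {0..<n}.\<close>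
definition Vn :: "lip \<Rightarrow> nat \<Rightarrow> (nat \<Rightarrow> lip set) set" where
  "Vn pi n = {v. (\<forall>i<n. v i \<in> Hpi pi) \<and> (\<forall>i\<ge>n. v i = lclass pi lzero)}"

definition vadd :: "(nat \<Rightarrow> lip set) \<Rightarrow> (nat \<Rightarrow> lip set) \<Rightarrow> (nat \<Rightarrow> lip set)" where
  "vadd u v = (\<lambda>i. cadd (u i) (v i))"

definition vweight :: "nat \<Rightarrow> (nat \<Rightarrow> lip set) \<Rightarrow> nat" where
  "vweight n v = (\<Sum>i<n. cweight (v i))"

definition vcoset :: "(nat \<Rightarrow> lip set) set \<Rightarrow> (nat \<Rightarrow> lip set) \<Rightarrow> (nat \<Rightarrow> lip set) set" where
  "vcoset C v = {vadd v c | c. c \<in> C}"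

definition additive_subgroup :: "lip \<Rightarrow> nat \<Rightarrow> (nat \<Rightarrow> lip set) set \<Rightarrow> bool" where
  "additive_subgroup pi n C \<longleftrightarrow> C \<subseteq> Vn pi n \<and> C \<noteq> {} \<and>
     (\<forall>u\<in>C. \<forall>v\<in>C. vadd u v \<in> C) \<and>
     (\<forall>u\<in>C. \<exists>w\<in>C. vadd u w = (\<lambda>i. lclass pi lzero))"

text \<open>(n,k) linear code: quotient H(Z)_pi^n / C has exactly (p^2)^(n-k) cosets.\<close>
definition linear_code :: "lip \<Rightarrow> nat \<Rightarrow> nat \<Rightarrow> nat \<Rightarrow> (nat \<Rightarrow> lip set) set \<Rightarrow> bool" where
  "linear_code pi p n k C \<longleftrightarrow> k \<le> n \<and> additive_subgroup pi n C \<and>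
     card (vcoset C ` Vn pi n) = (p^2)^(n - k)"

definition corrects :: "lip \<Rightarrow> nat \<Rightarrow> nat \<Rightarrow> (nat \<Rightarrow> lip set) set \<Rightarrow> bool" where
  "corrects pi n t C \<longleftrightarrow> (\<forall>u\<in>Vn pi n. \<forall>v\<in>Vn pi n.
     vweight n u \<le> t \<longrightarrow> vweight n v \<le> t \<longrightarrow> u \<noteq> v \<longrightarrow> vcoset C u \<noteq> vcoset C v)"

end

theory Submission
  imports Defs
begin

definition Nq :: "lip \<Rightarrow> int" where
  "Nq q = (case q of (a,b,c,d) \<Rightarrow> a^2+b^2+c^2+d^2)"

lemma Nq_mult: "Nq (lmult x y) = Nq x * Nq y"
  apply (cases x; cases y)
  by (simp add: Nq_def lmult_def power2_eq_square algebra_simps)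

lemma Nq_nonneg: "Nq x \<ge> 0"
  by (cases x) (simp add: Nq_def)

lemma sq_le_abs: "(x::int)^2 + y^2 + z^2 + w^2 \<le> (\<bar>x\<bar>+\<bar>y\<bar>+\<bar>z\<bar>+\<bar>w\<bar>)^2"
proof -
  have "(\<bar>x\<bar>+\<bar>y\<bar>+\<bar>z\<bar>+\<bar>w\<bar>)^2 = \<bar>x\<bar>^2+\<bar>y\<bar>^2+\<bar>z\<bar>^2+\<bar>w\<bar>^2
     + 2*(\<bar>x\<bar>*\<bar>y\<bar>+\<bar>x\<bar>*\<bar>z\<bar>+\<bar>x\<bar>*\<bar>w\<bar>+\<bar>y\<bar>*\<bar>z\<bar>+\<bar>y\<bar>*\<bar>w\<bar>+\<bar>z\<bar>*\<bar>w\<bar>)"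
    by (simp add: power2_eq_square algebra_simps)
  moreover have "0 \<le> \<bar>x\<bar>*\<bar>y\<bar>+\<bar>x\<bar>*\<bar>z\<bar>+\<bar>x\<bar>*\<bar>w\<bar>+\<bar>y\<bar>*\<bar>z\<bar>+\<bar>y\<bar>*\<bar>w\<bar>+\<bar>z\<bar>*\<bar>w\<bar>"
    by simp
  ultimately show ?thesis by simp
qed

lemma even_sq_abs: "even ((x::int)^2 - \<bar>x\<bar>)"
proof -
  have "(x::int)^2 - \<bar>x\<bar> = \<bar>x\<bar> * (\<bar>x\<bar> - 1)" by (simp add: power2_eq_square algebra_simps)
  thus ?thesis by simp
qed

lemma key:
  assumes "labsw a \<le> 2" "labsw b \<le> 2" "ladd a (lneg b) = lmult \<delta> pi"
    and "Nq pi = int p" "prime p" "p \<ge> 13"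
  shows "a = b"
proof -
  obtain a0 a1 a2 a3 where A: "a = (a0,a1,a2,a3)" by (cases a) auto
  obtain b0 b1 b2 b3 where B: "b = (b0,b1,b2,b3)" by (cases b) auto
  define d0 where "d0 = a0 - b0"
  define d1 where "d1 = a1 - b1"
  define d2 where "d2 = a2 - b2"
  define d3 where "d3 = a3 - b3"
  define L where "L = \<bar>d0\<bar>+\<bar>d1\<bar>+\<bar>d2\<bar>+\<bar>d3\<bar>"
  define Q where "Q = d0^2+d1^2+d2^2+d3^2"
  have ia: "int (labsw a) = \<bar>a0\<bar>+\<bar>a1\<bar>+\<bar>a2\<bar>+\<bar>a3\<bar>" by (simp add: labsw_def A)
  have ib: "int (labsw b) = \<bar>b0\<bar>+\<bar>b1\<bar>+\<bar>b2\<bar>+\<bar>b3\<bar>" by (simp add: labsw_def B)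
  have "int (labsw a) \<le> 2" "int (labsw b) \<le> 2" using assms(1,2) by simp_all
  hence ha: "\<bar>a0\<bar>+\<bar>a1\<bar>+\<bar>a2\<bar>+\<bar>a3\<bar> \<le> 2" and hb: "\<bar>b0\<bar>+\<bar>b1\<bar>+\<bar>b2\<bar>+\<bar>b3\<bar> \<le> 2"
    by (simp_all only: ia[symmetric] ib[symmetric])
  have "L \<le> (\<bar>a0\<bar>+\<bar>b0\<bar>) + (\<bar>a1\<bar>+\<bar>b1\<bar>) + (\<bar>a2\<bar>+\<bar>b2\<bar>) + (\<bar>a3\<bar>+\<bar>b3\<bar>)"
    unfolding L_def d0_def d1_def d2_def d3_def by (intro add_mono abs_triangle_ineq4)
  also have "\<dots> = (\<bar>a0\<bar>+\<bar>a1\<bar>+\<bar>a2\<bar>+\<bar>a3\<bar>) + (\<bar>b0\<bar>+\<bar>b1\<bar>+\<bar>b2\<bar>+\<bar>b3\<bar>)" by (simp only: ac_simps)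
  also have "\<dots> \<le> 4" using ha hb by (rule add_mono[where b=2 and d=2, simplified])
  finally have L4a: "L \<le> 4" .
  have L4: "L \<le> 4" "L \<ge> 0" using L4a unfolding L_def by simp_all
  have QL: "Q \<le> L^2" unfolding Q_def L_def by (rule sq_le_abs)
  have par: "even (Q - L)"
  proof -
    have "Q - L = (d0^2 - \<bar>d0\<bar>) + (d1^2 - \<bar>d1\<bar>) + (d2^2 - \<bar>d2\<bar>) + (d3^2 - \<bar>d3\<bar>)"
      unfolding Q_def L_def by simp
    thus ?thesis using even_sq_abs by simp
  qed
  have "Nq (ladd a (lneg b)) = Q"
    unfolding Q_def A B d0_def d1_def d2_def d3_def by (simp add: Nq_def ladd_def lneg_def)
  hence QN: "Q = Nq \<delta> * int p" using assms(3,4) Nq_mult by simp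
  have p13: "int p \<ge> 13" using assms(6) by simp
  have podd: "odd p" using assms(5) by (rule prime_odd_nat) (use assms(6) in simp)
  have "d0^2 \<ge> 0" "d1^2 \<ge> 0" "d2^2 \<ge> 0" "d3^2 \<ge> 0" by simp_all
  show ?thesis
  proof (cases "Nq \<delta> = 0")
    case True
    hence "Q = 0" using QN by simp
    hence "d0^2 = 0 \<and> d1^2 = 0 \<and> d2^2 = 0 \<and> d3^2 = 0"
      using \<open>d0^2 \<ge> 0\<close> \<open>d1^2 \<ge> 0\<close> \<open>d2^2 \<ge> 0\<close> \<open>d3^2 \<ge> 0\<close> unfolding Q_def by linarith
    hence "d0 = 0 \<and> d1 = 0 \<and> d2 = 0 \<and> d3 = 0" by simp
    thus ?thesis unfolding A B d0_def d1_def d2_def d3_def by simp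
  next
    case False
    hence n1: "Nq \<delta> \<ge> 1" using Nq_nonneg[of \<delta>] by simp
    have "1 * 13 \<le> Nq \<delta> * int p" by (rule mult_mono) (use n1 p13 Nq_nonneg in simp_all)
    hence Q13: "Q \<ge> 13" using QN by simp
    have L4b: "L \<ge> 4"
    proof (rule ccontr)
      assume "\<not> L \<ge> 4"
      hence "L \<le> 3" by simp
      hence "L^2 \<le> 3^2" by (rule power_mono) (use L4 in simp)
      thus False using QL Q13 by simp
    qed
    hence L4e: "L = 4" using L4 by simp
    have "Q = (Q - L) + 2 * 2" using L4e by simp
    hence "even Q" using par by (metis dvd_add dvd_triv_left)
    hence ev: "even (Nq \<delta>)" using QN podd by simp
    have "Nq \<delta> \<noteq> 1" using ev by auto
    hence "Nq \<delta> \<ge> 2" using n1 by simp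
    have "2 * 13 \<le> Nq \<delta> * int p" by (rule mult_mono) (use \<open>Nq \<delta> \<ge> 2\<close> p13 Nq_nonneg in simp_all)
    hence "Q \<ge> 26" using QN by simp
    moreover have "Q \<le> 16" using QL L4e by simp
    ultimately show ?thesis by simp
  qed
qed

lemma self_class: "q \<in> lclass pi q"
  unfolding lclass_def rcong_def
  by (rule CollectI, rule exI[of _ "(0,0,0,0)"], cases q, cases pi)
     (simp add: ladd_def lneg_def lmult_def)

lemma cweight_le: "cweight (lclass pi q) \<le> labsw q"
  unfolding cweight_def by (rule Least_le) (use self_class in blast)

definition E1 :: "lip set" where
  "E1 = {(1,0,0,0),(-1,0,0,0),(0,1,0,0),(0,-1,0,0),(0,0,1,0),(0,0,-1,0),(0,0,0,1),(0,0,0,-1)}"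

definition E2 :: "lip set" where
  "E2 = {(2,0,0,0),(-2,0,0,0),(0,2,0,0),(0,-2,0,0),(0,0,2,0),(0,0,-2,0),(0,0,0,2),(0,0,0,-2),
    (1,1,0,0),(1,-1,0,0),(-1,1,0,0),(-1,-1,0,0),
    (1,0,1,0),(1,0,-1,0),(-1,0,1,0),(-1,0,-1,0),
    (1,0,0,1),(1,0,0,-1),(-1,0,0,1),(-1,0,0,-1),
    (0,1,1,0),(0,1,-1,0),(0,-1,1,0),(0,-1,-1,0),
    (0,1,0,1),(0,1,0,-1),(0,-1,0,1),(0,-1,0,-1),
    (0,0,1,1),(0,0,1,-1),(0,0,-1,1),(0,0,-1,-1)}"

lemma cardE1: "card E1 = 8" by (simp add: E1_def)
lemma cardE2: "card E2 = 32" by (simp add: E2_def)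
lemma wE1: "q \<in> E1 \<Longrightarrow> labsw q = 1" by (auto simp: E1_def labsw_def)
lemma wE2: "q \<in> E2 \<Longrightarrow> labsw q = 2" by (auto simp: E2_def labsw_def)
lemma E1z: "lzero \<notin> E1" by (simp add: E1_def lzero_def)
lemma E2z: "lzero \<notin> E2" by (simp add: E2_def lzero_def)
lemma E12: "E1 \<inter> E2 = {}" using wE1 wE2 by fastforce

definition upd :: "nat \<Rightarrow> lip \<times> (nat \<Rightarrow> lip) \<Rightarrow> (nat \<Rightarrow> lip)" where
  "upd n x = (snd x)(n := fst x)"

fun S :: "nat \<Rightarrow> nat \<Rightarrow> (nat \<Rightarrow> lip) set" where
  "S 0 w = {\<lambda>_. lzero}"
| "S (Suc n) w = upd n ` ({lzero} \<times> S n w \<union>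
      (if 1 \<le> w then E1 \<times> S n (w - 1) else {}) \<union>
      (if 2 \<le> w then E2 \<times> S n (w - 2) else {}))"

lemma S_inv: "f \<in> S n w \<Longrightarrow> (\<forall>i\<ge>n. f i = lzero) \<and> (\<Sum>i<n. labsw (f i)) \<le> w"
proof (induction n arbitrary: f w)
  case 0
  then show ?case by simp
next
  case (Suc n)
  then obtain x where xf: "f = upd n x" and xm: "x \<in> {lzero} \<times> S n w \<union>
      (if 1 \<le> w then E1 \<times> S n (w - 1) else {}) \<union>
      (if 2 \<le> w then E2 \<times> S n (w - 2) else {})" using Suc.prems unfolding S.simps by blast
  obtain a g where x: "x = (a, g)" by (cases x)
  have fa: "f = g(n := a)" using xf x by (simp add: upd_def)
  have cs: "(a = lzero \<and> g \<in> S n w) \<or> (1 \<le> w \<and> a \<in> E1 \<and> g \<in> S n (w-1)) \<or> (2 \<le> w \<and> a \<in> E2 \<and> g \<in> S n (w-2))"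
    using xm x by (cases "1 \<le> w"; cases "2 \<le> w") auto
  have sm: "(\<Sum>i<Suc n. labsw (f i)) = (\<Sum>i<n. labsw (g i)) + labsw a"
    using fa by (simp add: sum.lessThan_Suc)
  have lz: "labsw lzero = 0" by (simp add: lzero_def labsw_def)
  from cs show ?case
  proof (elim disjE conjE)
    assume "a = lzero" "g \<in> S n w"
    with Suc.IH[of g w] show ?thesis using sm fa lz by auto
  next
    assume "1 \<le> w" "a \<in> E1" "g \<in> S n (w-1)"
    with Suc.IH[of g "w-1"] show ?thesis using sm fa wE1 by auto
  next
    assume "2 \<le> w" "a \<in> E2" "g \<in> S n (w-2)"
    with Suc.IH[of g "w-2"] show ?thesis using sm fa wE2 by auto
  qed
qed

lemma upd_inj: "inj_on (upd n) (UNIV \<times> {g. g n = lzero})"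
proof (rule inj_onI)
  fix x y assume "x \<in> UNIV \<times> {g. g n = lzero}" "y \<in> UNIV \<times> {g. g n = lzero}" "upd n x = upd n y"
  then show "x = y"
    apply (cases x; cases y; simp add: upd_def)
    by (metis fun_upd_same fun_upd_triv fun_upd_upd)
qed

lemma S_fin: "finite (S n w)"
proof (induction n arbitrary: w)
  case 0
  then show ?case by simp
next
  case (Suc n)
  have "finite E1" "finite E2" by (simp_all add: E1_def E2_def)
  then show ?case using Suc.IH by simp
qed

lemma S_card: "card (S (Suc n) w) = card (S n w) +
   (if 1 \<le> w then 8 * card (S n (w - 1)) else 0) + (if 2 \<le> w then 32 * card (S n (w - 2)) else 0)"
proof -
  define X1 where "X1 = {lzero} \<times> S n w"
  define X2 where "X2 = (if 1 \<le> w then E1 \<times> S n (w - 1) else {})"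
  define X3 where "X3 = (if 2 \<le> w then E2 \<times> S n (w - 2) else {})"
  have fE: "finite E1" "finite E2" by (simp_all add: E1_def E2_def)
  have f: "finite X1" "finite X2" "finite X3" unfolding X1_def X2_def X3_def using S_fin fE by simp_all
  have sub: "X1 \<union> X2 \<union> X3 \<subseteq> UNIV \<times> {g. g n = lzero}"
    unfolding X1_def X2_def X3_def using S_inv by (auto split: if_splits)
  have "card (S (Suc n) w) = card (upd n ` (X1 \<union> X2 \<union> X3))" unfolding X1_def X2_def X3_def by simp
  also have "\<dots> = card (X1 \<union> X2 \<union> X3)"
    by (rule card_image, rule inj_on_subset[OF upd_inj sub])
  also have "\<dots> = card X1 + card X2 + card X3"
  proof -
    have d1: "X1 \<inter> X2 = {}" unfolding X1_def X2_def using E1z by auto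
    have d2: "(X1 \<union> X2) \<inter> X3 = {}" unfolding X1_def X2_def X3_def using E2z E12 by auto
    show ?thesis using card_Un_disjoint[OF _ _ d2] card_Un_disjoint[OF _ _ d1] f by simp
  qed
  also have "\<dots> = card (S n w) +
   (if 1 \<le> w then 8 * card (S n (w - 1)) else 0) + (if 2 \<le> w then 32 * card (S n (w - 2)) else 0)"
    unfolding X1_def X2_def X3_def by (simp add: card_cartesian_product cardE1 cardE2)
  finally show ?thesis .
qed

lemma S0: "card (S n 0) = 1"
  by (induction n) (simp_all only: S_card, simp_all)

lemma S1: "card (S n 1) = 1 + 8 * n"
  by (induction n) (simp_all only: S_card, simp_all add: S0)

lemma S2: "card (S n 2) = 32 * n^2 + 8 * n + 1"
proof (induction n)
  case 0
  then show ?case by simp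
next
  case (Suc n)
  then show ?case by (simp only: S_card) (simp add: S0 S1[simplified] power2_eq_square algebra_simps)
qed

theorem theorem10:
  fixes pi :: lip and p n k :: nat and C :: "(nat \<Rightarrow> lip set) set"
  assumes "lmult pi (lconj pi) = (int p, 0, 0, 0)"
    and "prime p" and "p \<ge> 13"
    and "linear_code pi p n k C"
    and "corrects pi n 2 C"
  shows "(p^2)^(n - k) \<ge> 32 * n^2 + 8 * n + 1"
proof -
  have Npi: "Nq pi = int p" using assms(1)
    by (cases pi) (simp add: lmult_def lconj_def Nq_def power2_eq_square)
  define \<Phi> where "\<Phi> = (\<lambda>f::nat \<Rightarrow> lip. \<lambda>i. lclass pi (f i))"
  have small: "labsw (f i) \<le> 2" if "f \<in> S n 2" for f i
  proof (cases "i < n")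
    case True
    have "labsw (f i) \<le> (\<Sum>j<n. labsw (f j))"
      by (rule member_le_sum) (use True in auto)
    then show ?thesis using S_inv[OF that] by simp
  next
    case False
    then show ?thesis using S_inv[OF that] by (simp add: lzero_def labsw_def)
  qed
  have inV: "\<Phi> f \<in> Vn pi n" if "f \<in> S n 2" for f
    using S_inv[OF that] unfolding Vn_def Hpi_def \<Phi>_def by auto
  have wt: "vweight n (\<Phi> f) \<le> 2" if "f \<in> S n 2" for f
  proof -
    have "vweight n (\<Phi> f) \<le> (\<Sum>i<n. labsw (f i))"
      unfolding vweight_def \<Phi>_def by (rule sum_mono) (rule cweight_le)
    thus ?thesis using S_inv[OF that] by simp
  qed
  have injP: "inj_on \<Phi> (S n 2)"
  proof (rule inj_onI)
    fix f g assume f: "f \<in> S n 2" and g: "g \<in> S n 2" and e: "\<Phi> f = \<Phi> g"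
    show "f = g"
    proof
      fix i
      have "lclass pi (f i) = lclass pi (g i)" using e unfolding \<Phi>_def by meson
      hence "f i \<in> lclass pi (g i)" using self_class by metis
      then obtain \<delta> where "ladd (f i) (lneg (g i)) = lmult \<delta> pi"
        unfolding lclass_def rcong_def by auto
      then show "f i = g i" using key small[OF f] small[OF g] Npi assms(2,3) by blast
    qed
  qed
  have inj2: "inj_on (vcoset C \<circ> \<Phi>) (S n 2)"
  proof (rule inj_onI)
    fix f g assume f: "f \<in> S n 2" and g: "g \<in> S n 2" and e: "(vcoset C \<circ> \<Phi>) f = (vcoset C \<circ> \<Phi>) g"
    show "f = g"
    proof (rule ccontr)
      assume "f \<noteq> g"
      hence "\<Phi> f \<noteq> \<Phi> g" using injP f g by (meson inj_on_def)
      thus False using assms(5) inV[OF f] inV[OF g] wt[OF f] wt[OF g] e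
        unfolding corrects_def by auto
    qed
  qed
  have cardeq: "card (vcoset C ` Vn pi n) = (p^2)^(n - k)"
    using assms(4) unfolding linear_code_def by simp
  have "p > 0" using assms(3) by simp
  hence "card (vcoset C ` Vn pi n) > 0" using cardeq by simp
  hence fin: "finite (vcoset C ` Vn pi n)" by (rule card_ge_0_finite)
  have "(vcoset C \<circ> \<Phi>) ` S n 2 \<subseteq> vcoset C ` Vn pi n" using inV by auto
  hence "card ((vcoset C \<circ> \<Phi>) ` S n 2) \<le> card (vcoset C ` Vn pi n)"
    by (rule card_mono[OF fin])
  moreover have "card ((vcoset C \<circ> \<Phi>) ` S n 2) = 32 * n^2 + 8 * n + 1"
    using card_image[OF inj2] S2 by simp
  ultimately show ?thesis using cardeq by simp
qed

end
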